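(* Let $\Sigma$ be a finite ranked set (arities $\ge1$), $X$ a ranked set and $G\in\mathsf{V}X$. Then there is an operation $f$, taking an arity-respecting $X$-indexed family of models (for each $x\in X$, a model in the image of $\lfloor\cdot\rfloor$ on elements of $\mathsf{V}\Sigma$ of the arity of $x$) to a model, which is compatible with counting MSO and satisfies $f\big((\lfloor\eta(x)\rfloor)_{x\in X}\big)=\lfloor[\![G]\!](\eta)\rfloor$ (up to isomorphism) for every arity-preserving valuation $\eta:X\to\mathsf{V}\Sigma$.
   Context: Here a ranked set is a set whose elements have arities in $\{1,2,\dots\}$. A corner of a ranked set $V$ is $v[i]$ with $v\in V$, $1\le i\le$ arity of $v$. For $n\ge1$, an $n$-ary $\mathsf{V}$-hypergraph with ports over $\Sigma$ consists of a nonempty finite ranked set of hypervertices, an arity-preserving labelling by $\Sigma$, a binary directed edge relation on corners, and a total port function from corners to $\{1,\dots,n\}$ (corners mapped to $i$ are $i$-ports). $\mathsf{V}\Sigma$ denotes these up to isomorphism. Flattening of $K\in\mathsf{V}\mathsf{V}\Sigma$: hypervertices are pairs $(v,w)$, $v$ a hypervertex of $K$, $w$ a hypervertex of the label of $v$ (label and arity from $w$); arity that of $K$; if $w[i]$ is a $j$-port in the label of $v$ and $v[j]$ is a $k$-port in $K$, then $(v,w)[i]$ is a $k$-port; an edge $(v,w)[i]\to(v',w')[i']$ exists iff $v=v'$ and $w[i]\to w'[i']$ in the label of $v$, or $v[j]\to v'[j']$ in $K$ with $j,j'$ the port numbers of $w[i]$, $w'[i']$ in the labels of $v,v'$. $[\![G]\!](\eta)$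 is the flattening of $G$ with each label $x$ replaced by $\eta(x)$. For $K\in\mathsf{V}\Sigma$, the model $\lfloor K\rfloor$ has as universe the corners of the hypervertices, a binary relation for edges, for each $a\in\Sigma$ and $i\le$ arity of $a$ a unary relation selecting the $i$-th corners of hypervertices labelled $a$, and for each $i\le$ arity of $K$ a unary relation for the $i$-ports. Counting MSO (extended syntax) is MSO with predicates $|Y|\equiv k\bmod m$ (true iff $Y$ finite of size $\equiv k$ mod $m$), a set-inclusion predicate, a singleton predicate, and set constants $[\psi]$ for each quantifier-free formula $\psi(x)$ with one free variable; quantifier rank counts first- and second-order quantifiers alike. Two models are $(r,M)$-equivalent if they satisfy the same such sentences of quantifier rank at most $r$ using moduli only from $M\subseteq\mathbb{N}$. An operation on families of models is compatible with counting MSO if for all $r\in\mathbb{N}$ and $M\subseteq\mathbb{N}$, componentwise $(r,M)$-equivalent inputs give $(r,M)$-equivalent outputs. *)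

theory Defs
  imports Main
begin

definition ranked :: "'a set \<Rightarrow> ('a \<Rightarrow> nat) \<Rightarrow> bool" where
  "ranked A ar \<longleftrightarrow> (\<forall>a\<in>A. 1 \<le> ar a)"

text \<open>The arity of a hypervertex is the arity
  of its label (arity-preserving labelling).\<close>
record ('v, 'l) hg =
  hverts :: "'v set"
  hlab   :: "'v \<Rightarrow> 'l"
  hedge  :: "(('v \<times> nat) \<times> ('v \<times> nat)) set"
  hport  :: "'v \<times> nat \<Rightarrow> nat"
  harity :: nat

definition corners :: "('l \<Rightarrow> nat) \<Rightarrow> ('v, 'l) hg \<Rightarrow> ('v \<times> nat) set" where
  "corners ar K = {(v, i). v \<in> hverts K \<and> 1 \<le> i \<and> i \<le> ar (hlab K v)}"

definition wf_hg :: "'l set \<Rightarrow> ('l \<Rightarrow> nat) \<Rightarrow> ('v, 'l) hg \<Rightarrow> bool" where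
  "wf_hg L ar K \<longleftrightarrow>
     1 \<le> harity K \<and>
     finite (hverts K) \<and> hverts K \<noteq> {} \<and>
     (\<forall>v\<in>hverts K. hlab K v \<in> L) \<and>
     hedge K \<subseteq> corners ar K \<times> corners ar K \<and>
     (\<forall>c\<in>corners ar K. 1 \<le> hport K c \<and> hport K c \<le> harity K)"

definition valuation :: "'s set \<Rightarrow> ('s \<Rightarrow> nat) \<Rightarrow> 'x set \<Rightarrow> ('x \<Rightarrow> nat)
    \<Rightarrow> ('x \<Rightarrow> ('v, 's) hg) \<Rightarrow> bool" where
  "valuation S arS X arX \<eta> \<longleftrightarrow> (\<forall>x\<in>X. wf_hg S arS (\<eta> x) \<and> harity (\<eta> x) = arX x)"

definition flatten :: "('s \<Rightarrow> nat) \<Rightarrow> ('w, 'x) hg \<Rightarrow> ('x \<Rightarrow> ('v, 's) hg)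
    \<Rightarrow> ('w \<times> 'v, 's) hg" where
  "flatten arS G \<eta> =
    (let lab = (\<lambda>(v, w). hlab (\<eta> (hlab G v)) w);
         pt  = (\<lambda>((v, w), i). hport (\<eta> (hlab G v)) (w, i));
         V   = {(v, w). v \<in> hverts G \<and> w \<in> hverts (\<eta> (hlab G v))};
         C   = {(u, i). u \<in> V \<and> 1 \<le> i \<and> i \<le> arS (lab u)}
     in \<lparr> hverts = V,
          hlab = lab,
          hedge = {(((v, w), i), ((v', w'), i')).
                     ((v, w), i) \<in> C \<and> ((v', w'), i') \<in> C \<and>
                     ((v = v' \<and> ((w, i), (w', i')) \<in> hedge (\<eta> (hlab G v))) \<or>
                      ((v, pt ((v, w), i)), (v', pt ((v', w'), i'))) \<in> hedge G)},
          hport = (\<lambda>((v, w), i). hport G (v, pt ((v, w), i))),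
          harity = harity G \<rparr>)"

record ('u, 'p) model =
  univ :: "'u set"
  brel :: "('u \<times> 'u) set"
  upred :: "'p \<Rightarrow> 'u set"

definition to_model :: "('s \<Rightarrow> nat) \<Rightarrow> ('v, 's) hg \<Rightarrow> ('v \<times> nat, ('s \<times> nat) + nat) model" where
  "to_model ar K =
     \<lparr> univ = corners ar K,
       brel = hedge K,
       upred = (\<lambda>p. case p of
                   Inl (a, i) \<Rightarrow> {(v, j) \<in> corners ar K. hlab K v = a \<and> j = i}
                 | Inr i \<Rightarrow> {c \<in> corners ar K. 1 \<le> i \<and> i \<le> harity K \<and> hport K c = i}) \<rparr>"

definition iso_model :: "('u, 'p) model \<Rightarrow> ('u2, 'p) model \<Rightarrow> bool" where
  "iso_model A B \<longleftrightarrow> (\<exists>h. bij_betw h (univ A) (univ B) \<and>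
      (\<forall>a\<in>univ A. \<forall>b\<in>univ A. (a, b) \<in> brel A \<longleftrightarrow> (h a, h b) \<in> brel B) \<and>
      (\<forall>p. \<forall>a\<in>univ A. a \<in> upred A p \<longleftrightarrow> h a \<in> upred B p))"

text \<open>Quantifier-free formulas with the single free first-order variable x.\<close>
datatype 'p qf =
    QEq
  | QEdge
  | QPred 'p
  | QNot "'p qf"
  | QAnd "'p qf" "'p qf"

datatype 'p sterm = SVar nat | SConst "'p qf"

datatype 'p fm =
    Eq nat nat
  | Edge nat nat
  | Pred 'p nat
  | Mem nat "'p sterm"
  | CardMod "'p sterm" nat nat
  | Subset "'p sterm" "'p sterm"
  | Single "'p sterm"
  | Neg "'p fm"
  | Conj "'p fm" "'p fm"
  | ExFO nat "'p fm"
  | ExSO nat "'p fm"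

primrec qf_sat :: "('u, 'p) model \<Rightarrow> 'p qf \<Rightarrow> 'u \<Rightarrow> bool" where
  "qf_sat A QEq a = True"
| "qf_sat A QEdge a = ((a, a) \<in> brel A)"
| "qf_sat A (QPred p) a = (a \<in> upred A p)"
| "qf_sat A (QNot \<psi>) a = (\<not> qf_sat A \<psi> a)"
| "qf_sat A (QAnd \<psi> \<chi>) a = (qf_sat A \<psi> a \<and> qf_sat A \<chi> a)"

primrec sval :: "('u, 'p) model \<Rightarrow> (nat \<Rightarrow> 'u set) \<Rightarrow> 'p sterm \<Rightarrow> 'u set" where
  "sval A V (SVar j) = V j"
| "sval A V (SConst \<psi>) = {a \<in> univ A. qf_sat A \<psi> a}"

primrec sat :: "('u, 'p) model \<Rightarrow> (nat \<Rightarrow> 'u) \<Rightarrow> (nat \<Rightarrow> 'u set) \<Rightarrow> 'p fm \<Rightarrow> bool" where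
  "sat A v V (Eq i j) = (v i = v j)"
| "sat A v V (Edge i j) = ((v i, v j) \<in> brel A)"
| "sat A v V (Pred p i) = (v i \<in> upred A p)"
| "sat A v V (Mem i T) = (v i \<in> sval A V T)"
| "sat A v V (CardMod T k m) = (finite (sval A V T) \<and> card (sval A V T) mod m = k mod m)"
| "sat A v V (Subset T T') = (sval A V T \<subseteq> sval A V T')"
| "sat A v V (Single T) = (\<exists>a. sval A V T = {a})"
| "sat A v V (Neg \<phi>) = (\<not> sat A v V \<phi>)"
| "sat A v V (Conj \<phi> \<psi>) = (sat A v V \<phi> \<and> sat A v V \<psi>)"
| "sat A v V (ExFO i \<phi>) = (\<exists>a\<in>univ A. sat A (v(i := a)) V \<phi>)"
| "sat A v V (ExSO j \<phi>) = (\<exists>S. S \<subseteq> univ A \<and> sat A v (V(j := S)) \<phi>)"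

primrec svars_t :: "'p sterm \<Rightarrow> nat set" where
  "svars_t (SVar j) = {j}"
| "svars_t (SConst \<psi>) = {}"

primrec ffv :: "'p fm \<Rightarrow> nat set" where
  "ffv (Eq i j) = {i, j}"
| "ffv (Edge i j) = {i, j}"
| "ffv (Pred p i) = {i}"
| "ffv (Mem i T) = {i}"
| "ffv (CardMod T k m) = {}"
| "ffv (Subset T T') = {}"
| "ffv (Single T) = {}"
| "ffv (Neg \<phi>) = ffv \<phi>"
| "ffv (Conj \<phi> \<psi>) = ffv \<phi> \<union> ffv \<psi>"
| "ffv (ExFO i \<phi>) = ffv \<phi> - {i}"
| "ffv (ExSO j \<phi>) = ffv \<phi>"

primrec sfv :: "'p fm \<Rightarrow> nat set" where
  "sfv (Eq i j) = {}"
| "sfv (Edge i j) = {}"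
| "sfv (Pred p i) = {}"
| "sfv (Mem i T) = svars_t T"
| "sfv (CardMod T k m) = svars_t T"
| "sfv (Subset T T') = svars_t T \<union> svars_t T'"
| "sfv (Single T) = svars_t T"
| "sfv (Neg \<phi>) = sfv \<phi>"
| "sfv (Conj \<phi> \<psi>) = sfv \<phi> \<union> sfv \<psi>"
| "sfv (ExFO i \<phi>) = sfv \<phi>"
| "sfv (ExSO j \<phi>) = sfv \<phi> - {j}"

primrec qrank :: "'p fm \<Rightarrow> nat" where
  "qrank (Eq i j) = 0"
| "qrank (Edge i j) = 0"
| "qrank (Pred p i) = 0"
| "qrank (Mem i T) = 0"
| "qrank (CardMod T k m) = 0"
| "qrank (Subset T T') = 0"
| "qrank (Single T) = 0"
| "qrank (Neg \<phi>) = qrank \<phi>"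
| "qrank (Conj \<phi> \<psi>) = max (qrank \<phi>) (qrank \<psi>)"
| "qrank (ExFO i \<phi>) = Suc (qrank \<phi>)"
| "qrank (ExSO j \<phi>) = Suc (qrank \<phi>)"

primrec moduli :: "'p fm \<Rightarrow> nat set" where
  "moduli (Eq i j) = {}"
| "moduli (Edge i j) = {}"
| "moduli (Pred p i) = {}"
| "moduli (Mem i T) = {}"
| "moduli (CardMod T k m) = {m}"
| "moduli (Subset T T') = {}"
| "moduli (Single T) = {}"
| "moduli (Neg \<phi>) = moduli \<phi>"
| "moduli (Conj \<phi> \<psi>) = moduli \<phi> \<union> moduli \<psi>"
| "moduli (ExFO i \<phi>) = moduli \<phi>"
| "moduli (ExSO j \<phi>) = moduli \<phi>"

definition sentence :: "'p fm \<Rightarrow> bool" where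
  "sentence \<phi> \<longleftrightarrow> ffv \<phi> = {} \<and> sfv \<phi> = {}"

definition holds :: "('u, 'p) model \<Rightarrow> 'p fm \<Rightarrow> bool" where
  "holds A \<phi> \<longleftrightarrow> sat A (\<lambda>_. undefined) (\<lambda>_. {}) \<phi>"

definition rM_equiv :: "nat \<Rightarrow> nat set \<Rightarrow> ('u, 'p) model \<Rightarrow> ('u2, 'p) model \<Rightarrow> bool" where
  "rM_equiv r M A B \<longleftrightarrow>
     (\<forall>\<phi>. sentence \<phi> \<and> qrank \<phi> \<le> r \<and> moduli \<phi> \<subseteq> M \<longrightarrow> (holds A \<phi> \<longleftrightarrow> holds B \<phi>))"

definition cmso_compatible :: "'x set \<Rightarrow> ('x \<Rightarrow> ('u, 'p) model set)
    \<Rightarrow> (('x \<Rightarrow> ('u, 'p) model) \<Rightarrow> ('u2, 'q) model) \<Rightarrow> bool" where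
  "cmso_compatible X D f \<longleftrightarrow>
     (\<forall>r M m m'. (\<forall>x\<in>X. m x \<in> D x \<and> m' x \<in> D x \<and> rM_equiv r M (m x) (m' x))
                 \<longrightarrow> rM_equiv r M (f m) (f m'))"

end

theory Submission
  imports Defs
begin

lemma sval_coinc: "(\<forall>j\<in>svars_t T. S j = S' j) \<Longrightarrow> sval A S T = sval A S' T"
  by (cases T) auto

lemma sat_coinc:
  "(\<forall>i\<in>ffv \<phi>. a i = a' i) \<Longrightarrow> (\<forall>j\<in>sfv \<phi>. S j = S' j) \<Longrightarrow> sat A a S \<phi> = sat A a' S' \<phi>"
proof (induction \<phi> arbitrary: a a' S S')
  case (Mem i T) then show ?case using sval_coinc[of T S S' A] by auto
next
  case (CardMod T k m) then show ?case using sval_coinc[of T S S' A] by auto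
next
  case (Subset T T') then show ?case using sval_coinc[of T S S' A] sval_coinc[of T' S S' A] by auto
next
  case (Single T) then show ?case using sval_coinc[of T S S' A] by auto
next
  case (Neg \<phi>) then show ?case by auto
next
  case (Conj \<phi>1 \<phi>2)
  have "sat A a S \<phi>1 = sat A a' S' \<phi>1" by (rule Conj.IH(1)) (use Conj.prems in auto)
  moreover have "sat A a S \<phi>2 = sat A a' S' \<phi>2" by (rule Conj.IH(2)) (use Conj.prems in auto)
  ultimately show ?case by simp
next
  case (ExFO i \<phi>)
  have "\<And>c. sat A (a(i:=c)) S \<phi> = sat A (a'(i:=c)) S' \<phi>"
    using ExFO by (intro ExFO.IH) auto
  then show ?case by simp
next
  case (ExSO j \<phi>)
  have "\<And>X. sat A a (S(j:=X)) \<phi> = sat A a' (S'(j:=X)) \<phi>"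
    using ExSO by (intro ExSO.IH) auto
  then show ?case by simp
qed auto

definition good :: "nat \<Rightarrow> nat set \<Rightarrow> nat set \<Rightarrow> nat set \<Rightarrow> 'p fm \<Rightarrow> bool" where
  "good r M F SV \<phi> \<longleftrightarrow> qrank \<phi> \<le> r \<and> moduli \<phi> \<subseteq> M \<and> ffv \<phi> \<subseteq> F \<and> sfv \<phi> \<subseteq> SV"

definition eqv :: "nat \<Rightarrow> nat set \<Rightarrow> nat set \<Rightarrow> nat set \<Rightarrow> ('u, 'p) model \<Rightarrow> (nat \<Rightarrow> 'u)
   \<Rightarrow> (nat \<Rightarrow> 'u set) \<Rightarrow> ('u2, 'p) model \<Rightarrow> (nat \<Rightarrow> 'u2) \<Rightarrow> (nat \<Rightarrow> 'u2 set) \<Rightarrow> bool" where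
  "eqv r M F SV A a S B b T \<longleftrightarrow> (\<forall>\<phi>. good r M F SV \<phi> \<longrightarrow> (sat A a S \<phi> \<longleftrightarrow> sat B b T \<phi>))"

lemma eqv_sym: "eqv r M F SV A a S B b T \<Longrightarrow> eqv r M F SV B b T A a S"
  unfolding eqv_def by blast

lemma eqvD: "eqv r M F SV A a S B b T \<Longrightarrow> good r M F SV \<phi> \<Longrightarrow> sat A a S \<phi> = sat B b T \<phi>"
  unfolding eqv_def by blast

lemma eqv_upd:
  fixes A :: "('u, 'p) model"
  assumes "eqv r M F SV A a S B b T" "r' \<le> r" "F' \<subseteq> F" "i \<notin> F'"
  shows "eqv r' M F' SV A (a(i:=c)) S B (b(i:=d)) T"
  unfolding eqv_def
proof (intro allI impI)
  fix \<phi> :: "'p fm" assume g: "good r' M F' SV \<phi>"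
  then have "good r M F SV \<phi>" using assms unfolding good_def by auto
  then have "sat A a S \<phi> = sat B b T \<phi>" using assms(1) eqvD by blast
  moreover have "sat A (a(i:=c)) S \<phi> = sat A a S \<phi>"
    using g assms(4) unfolding good_def by (intro sat_coinc) auto
  moreover have "sat B (b(i:=d)) T \<phi> = sat B b T \<phi>"
    using g assms(4) unfolding good_def by (intro sat_coinc) auto
  ultimately show "sat A (a(i:=c)) S \<phi> = sat B (b(i:=d)) T \<phi>" by simp
qed

definition TT :: "'p fm" where "TT = Subset (SConst QEq) (SConst QEq)"

lemma collect:
  assumes "finite D"
    and "\<forall>d\<in>D. \<exists>\<psi>. good r M F SV \<psi> \<and> sat A a S \<psi> \<and> \<not> sat B (bf d) (Tf d) \<psi>"
  shows "\<exists>\<Psi>. good r M F SV \<Psi> \<and> sat A a S \<Psi> \<and> (\<forall>d\<in>D. \<not> sat B (bf d) (Tf d) \<Psi>)"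
  using assms
proof (induction D rule: finite_induct)
  case empty
  show ?case by (rule exI[of _ TT]) (auto simp: TT_def good_def)
next
  case (insert d D)
  then obtain \<Psi> where P: "good r M F SV \<Psi> \<and> sat A a S \<Psi> \<and> (\<forall>d\<in>D. \<not> sat B (bf d) (Tf d) \<Psi>)"
    by auto
  from insert obtain \<psi> where p: "good r M F SV \<psi> \<and> sat A a S \<psi> \<and> \<not> sat B (bf d) (Tf d) \<psi>"
    by auto
  show ?case
    by (rule exI[of _ "Conj \<psi> \<Psi>"]) (use P p in \<open>auto simp: good_def\<close>)
qed

lemma distinguish:
  assumes "\<not> (sat A a S \<phi> = sat B b T \<phi>)" "good r M F SV \<phi>"
  shows "\<exists>\<psi>. good r M F SV \<psi> \<and> sat A a S \<psi> \<and> \<not> sat B b T \<psi>"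
proof (cases "sat A a S \<phi>")
  case True then show ?thesis using assms by blast
next
  case False then show ?thesis using assms
    by (intro exI[of _ "Neg \<phi>"]) (auto simp: good_def)
qed

lemma ex_fo:
  assumes fin: "finite (univ B)" and e: "eqv (Suc r) M F SV A a S B b T" and c: "c \<in> univ A"
  shows "\<exists>d\<in>univ B. eqv r M (insert i F) SV A (a(i:=c)) S B (b(i:=d)) T"
proof (rule ccontr)
  assume nt: "\<not> ?thesis"
  then have "\<forall>d\<in>univ B. \<exists>\<psi>. good r M (insert i F) SV \<psi> \<and> sat A (a(i:=c)) S \<psi> \<and> \<not> sat B (b(i:=d)) T \<psi>"
  proof (intro ballI)
    fix d assume "d \<in> univ B"
    then have "\<not> eqv r M (insert i F) SV A (a(i:=c)) S B (b(i:=d)) T" using nt by blast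
    then obtain \<phi> where "good r M (insert i F) SV \<phi>" "\<not> (sat A (a(i:=c)) S \<phi> = sat B (b(i:=d)) T \<phi>)"
      unfolding eqv_def by blast
    then show "\<exists>\<psi>. good r M (insert i F) SV \<psi> \<and> sat A (a(i:=c)) S \<psi> \<and> \<not> sat B (b(i:=d)) T \<psi>"
      using distinguish by blast
  qed
  from collect[OF fin this] obtain \<Psi> where
    P: "good r M (insert i F) SV \<Psi>" "sat A (a(i:=c)) S \<Psi>" "\<forall>d\<in>univ B. \<not> sat B (b(i:=d)) T \<Psi>"
    by blast
  have g: "good (Suc r) M F SV (ExFO i \<Psi>)" using P(1) by (auto simp: good_def)
  have "sat A a S (ExFO i \<Psi>)" using P(2) c by auto
  then have "sat B b T (ExFO i \<Psi>)" using eqvD[OF e g] by simp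
  then show False using P(3) by auto
qed

lemma ex_so:
  assumes fin: "finite (univ B)" and e: "eqv (Suc r) M F SV A a S B b T" and c: "X \<subseteq> univ A"
  shows "\<exists>Y. Y \<subseteq> univ B \<and> eqv r M F (insert j SV) A a (S(j:=X)) B b (T(j:=Y))"
proof (rule ccontr)
  assume nt: "\<not> ?thesis"
  then have "\<forall>Y\<in>Pow (univ B). \<exists>\<psi>. good r M F (insert j SV) \<psi> \<and> sat A a (S(j:=X)) \<psi> \<and> \<not> sat B b (T(j:=Y)) \<psi>"
  proof (intro ballI)
    fix Y assume "Y \<in> Pow (univ B)"
    then have "\<not> eqv r M F (insert j SV) A a (S(j:=X)) B b (T(j:=Y))" using nt by blast
    then obtain \<phi> where "good r M F (insert j SV) \<phi>" "\<not> (sat A a (S(j:=X)) \<phi> = sat B b (T(j:=Y)) \<phi>)"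
      unfolding eqv_def by blast
    then show "\<exists>\<psi>. good r M F (insert j SV) \<psi> \<and> sat A a (S(j:=X)) \<psi> \<and> \<not> sat B b (T(j:=Y)) \<psi>"
      using distinguish by blast
  qed
  from collect[OF _ this] fin obtain \<Psi> where
    P: "good r M F (insert j SV) \<Psi>" "sat A a (S(j:=X)) \<Psi>" "\<forall>Y\<in>Pow (univ B). \<not> sat B b (T(j:=Y)) \<Psi>"
    by blast
  have g: "good (Suc r) M F SV (ExSO j \<Psi>)" using P(1) by (auto simp: good_def)
  have "sat A a S (ExSO j \<Psi>)" using P(2) c by auto
  then have "sat B b T (ExSO j \<Psi>)" using eqvD[OF e g] by simp
  then show False using P(3) by auto
qed


definition emb :: "'w \<Rightarrow> 'v \<times> nat \<Rightarrow> ('w \<times> 'v) \<times> nat" where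
  "emb v c = ((v, fst c), snd c)"
definition loc :: "('w \<times> 'v) \<times> nat \<Rightarrow> 'w" where "loc a = fst (fst a)"
definition prj :: "('w \<times> 'v) \<times> nat \<Rightarrow> 'v \<times> nat" where "prj a = (snd (fst a), snd a)"

lemma loc_emb[simp]: "loc (emb v c) = v" by (simp add: loc_def emb_def)
lemma prj_emb[simp]: "prj (emb v c) = c" by (simp add: prj_def emb_def)
lemma emb_loc_prj[simp]: "emb (loc a) (prj a) = a" by (simp add: loc_def prj_def emb_def)
lemma emb_eq[simp]: "emb v c = emb v' c' \<longleftrightarrow> v = v' \<and> c = c'"
  by (cases c; cases c') (auto simp: emb_def)
lemma inj_emb: "inj (emb v)" by (auto intro: injI)
lemma eq_loc_prj: "a = b \<longleftrightarrow> loc a = loc b \<and> prj a = prj b"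
  by (metis emb_loc_prj)
lemma prj_loc_simp[simp]: "loc ((v, w), i) = v" "prj ((v, w), i) = (w, i)"
  by (auto simp: loc_def prj_def)

definition compose :: "('x \<Rightarrow> nat) \<Rightarrow> ('w, 'x) hg \<Rightarrow> ('x \<Rightarrow> ('v \<times> nat, 'a + nat) model)
    \<Rightarrow> (('w \<times> 'v) \<times> nat, 'a + nat) model" where
  "compose arX G m = \<lparr> univ = {a. loc a \<in> hverts G \<and> prj a \<in> univ (m (hlab G (loc a)))},
    brel = {(a, b). (loc a \<in> hverts G \<and> prj a \<in> univ (m (hlab G (loc a)))) \<and>
                    (loc b \<in> hverts G \<and> prj b \<in> univ (m (hlab G (loc b)))) \<and>
       ((loc a = loc b \<and> (prj a, prj b) \<in> brel (m (hlab G (loc a)))) \<or>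
        (\<exists>p p'. 1 \<le> p \<and> p \<le> arX (hlab G (loc a)) \<and> 1 \<le> p' \<and> p' \<le> arX (hlab G (loc b)) \<and>
           prj a \<in> upred (m (hlab G (loc a))) (Inr p) \<and> prj b \<in> upred (m (hlab G (loc b))) (Inr p') \<and>
           ((loc a, p), (loc b, p')) \<in> hedge G))},
    upred = (\<lambda>q. {a. loc a \<in> hverts G \<and> prj a \<in> univ (m (hlab G (loc a))) \<and>
       (case q of Inl s \<Rightarrow> prj a \<in> upred (m (hlab G (loc a))) (Inl s)
        | Inr k \<Rightarrow> 1 \<le> k \<and> k \<le> harity G \<and> (\<exists>p. 1 \<le> p \<and> p \<le> arX (hlab G (loc a)) \<and>
             prj a \<in> upred (m (hlab G (loc a))) (Inr p) \<and> hport G (loc a, p) = k))}) \<rparr>"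

lemma compose_univ: "a \<in> univ (compose arX G m) \<longleftrightarrow> loc a \<in> hverts G \<and> prj a \<in> univ (m (hlab G (loc a)))"
  by (simp add: compose_def)

lemma compose_brel: "(a, b) \<in> brel (compose arX G m) \<longleftrightarrow>
   a \<in> univ (compose arX G m) \<and> b \<in> univ (compose arX G m) \<and>
       ((loc a = loc b \<and> (prj a, prj b) \<in> brel (m (hlab G (loc a)))) \<or>
        (\<exists>p p'. 1 \<le> p \<and> p \<le> arX (hlab G (loc a)) \<and> 1 \<le> p' \<and> p' \<le> arX (hlab G (loc b)) \<and>
           prj a \<in> upred (m (hlab G (loc a))) (Inr p) \<and> prj b \<in> upred (m (hlab G (loc b))) (Inr p') \<and>
           ((loc a, p), (loc b, p')) \<in> hedge G))"
  by (simp add: compose_def)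

lemma compose_upred_Inl: "a \<in> upred (compose arX G m) (Inl s) \<longleftrightarrow>
   a \<in> univ (compose arX G m) \<and> prj a \<in> upred (m (hlab G (loc a))) (Inl s)"
  by (simp add: compose_def)

lemma compose_upred_Inr: "a \<in> upred (compose arX G m) (Inr k) \<longleftrightarrow>
   a \<in> univ (compose arX G m) \<and> 1 \<le> k \<and> k \<le> harity G \<and> (\<exists>p. 1 \<le> p \<and> p \<le> arX (hlab G (loc a)) \<and>
             prj a \<in> upred (m (hlab G (loc a))) (Inr p) \<and> hport G (loc a, p) = k)"
  by (simp add: compose_def)

fun qbig_or :: "'p qf list \<Rightarrow> 'p qf" where
  "qbig_or [] = QNot QEq"
| "qbig_or (x # xs) = QNot (QAnd (QNot x) (QNot (qbig_or xs)))"

lemma qbig_or_sat: "qf_sat A (qbig_or xs) c \<longleftrightarrow> (\<exists>x\<in>set xs. qf_sat A x c)"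
  by (induction xs) auto

definition qex :: "nat \<Rightarrow> (nat \<Rightarrow> 'p qf) \<Rightarrow> 'p qf" where
  "qex n g = qbig_or (map g [1..<Suc n])"

lemma qex_sat: "qf_sat A (qex n g) c \<longleftrightarrow> (\<exists>p. 1 \<le> p \<and> p \<le> n \<and> qf_sat A (g p) c)"
  by (auto simp: qex_def qbig_or_sat)

primrec tr :: "('x \<Rightarrow> nat) \<Rightarrow> ('w, 'x) hg \<Rightarrow> 'w \<Rightarrow> ('a + nat) qf \<Rightarrow> ('a + nat) qf" where
  "tr arX G v QEq = QEq"
| "tr arX G v QEdge = QNot (QAnd (QNot QEdge) (QNot (qex (arX (hlab G v)) (\<lambda>p. qex (arX (hlab G v))
      (\<lambda>p'. if ((v, p), (v, p')) \<in> hedge G then QAnd (QPred (Inr p)) (QPred (Inr p')) else QNot QEq)))))"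
| "tr arX G v (QPred q) = (case q of Inl s \<Rightarrow> QPred (Inl s)
     | Inr k \<Rightarrow> if 1 \<le> k \<and> k \<le> harity G
                then qex (arX (hlab G v)) (\<lambda>p. if hport G (v, p) = k then QPred (Inr p) else QNot QEq)
                else QNot QEq)"
| "tr arX G v (QNot \<psi>) = QNot (tr arX G v \<psi>)"
| "tr arX G v (QAnd \<psi> \<chi>) = QAnd (tr arX G v \<psi>) (tr arX G v \<chi>)"

lemma tr_correct:
  assumes "a \<in> univ (compose arX G m)"
  shows "qf_sat (compose arX G m) \<psi> a = qf_sat (m (hlab G (loc a))) (tr arX G (loc a) \<psi>) (prj a)"
proof (induction \<psi>)
  case QEdge
  show ?case using assms
    by (simp add: compose_brel qex_sat) (auto split: if_splits)
next
  case (QPred q)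
  show ?case using assms
    by (cases q) (auto simp: compose_upred_Inl compose_upred_Inr qex_sat split: if_splits)
qed auto

primrec trS :: "('x \<Rightarrow> nat) \<Rightarrow> ('w, 'x) hg \<Rightarrow> 'w \<Rightarrow> ('a + nat) sterm \<Rightarrow> ('a + nat) sterm" where
  "trS arX G v (SVar j) = SVar j"
| "trS arX G v (SConst \<psi>) = SConst (tr arX G v \<psi>)"

lemma svars_trS[simp]: "svars_t (trS arX G v T) = svars_t T"
  by (cases T) auto

definition sc :: "'w \<Rightarrow> (nat \<Rightarrow> (('w \<times> 'v) \<times> nat) set) \<Rightarrow> nat \<Rightarrow> ('v \<times> nat) set" where
  "sc v S = (\<lambda>j. emb v -` S j)"

lemma sval_comp:
  assumes "\<forall>j\<in>svars_t T. S j \<subseteq> univ (compose arX G m)"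
  shows "a \<in> sval (compose arX G m) S T \<longleftrightarrow> a \<in> univ (compose arX G m) \<and>
          prj a \<in> sval (m (hlab G (loc a))) (sc (loc a) S) (trS arX G (loc a) T)"
proof (cases T)
  case (SVar j)
  then show ?thesis using assms by (auto simp: sc_def)
next
  case (SConst \<psi>)
  then show ?thesis using tr_correct[of a arX G m \<psi>] by (auto simp: compose_univ)
qed

lemma sval_comp_vimage:
  assumes "\<forall>j\<in>svars_t T. S j \<subseteq> univ (compose arX G m)" "v \<in> hverts G"
  shows "emb v -` sval (compose arX G m) S T = sval (m (hlab G v)) (sc v S) (trS arX G v T)"
proof -
  have "sval (m (hlab G v)) (sc v S) (trS arX G v T) \<subseteq> univ (m (hlab G v))"
  proof (cases T)
    case (SVar j)
    show ?thesis
    proof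
      fix c assume "c \<in> sval (m (hlab G v)) (sc v S) (trS arX G v T)"
      then have "emb v c \<in> S j" using SVar by (simp add: sc_def)
      then have "emb v c \<in> univ (compose arX G m)" using assms SVar by auto
      then show "c \<in> univ (m (hlab G v))" by (simp only: compose_univ loc_emb prj_emb)
    qed
  qed auto
  note sub = this
  show ?thesis
  proof (rule set_eqI)
    fix c
    have "c \<in> emb v -` sval (compose arX G m) S T \<longleftrightarrow> emb v c \<in> univ (compose arX G m) \<and>
          c \<in> sval (m (hlab G v)) (sc v S) (trS arX G v T)"
      by (simp only: vimage_eq sval_comp[OF assms(1)] loc_emb prj_emb)
    then show "c \<in> emb v -` sval (compose arX G m) S T \<longleftrightarrow> c \<in> sval (m (hlab G v)) (sc v S) (trS arX G v T)"
      using sub assms(2) unfolding compose_univ loc_emb prj_emb by blast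
  qed
qed

lemma sval_comp_sub:
  assumes "\<forall>j\<in>svars_t T. S j \<subseteq> univ (compose arX G m)"
  shows "sval (compose arX G m) S T \<subseteq> univ (compose arX G m)"
  using sval_comp[OF assms] by auto

lemma subset_decomp:
  assumes "S \<subseteq> {a. loc a \<in> V}"
  shows "S \<subseteq> S' \<longleftrightarrow> (\<forall>v\<in>V. emb v -` S \<subseteq> emb v -` S')"
proof
  assume "\<forall>v\<in>V. emb v -` S \<subseteq> emb v -` S'"
  note h = this
  show "S \<subseteq> S'"
  proof
    fix x assume x: "x \<in> S"
    then have "loc x \<in> V" using assms by auto
    moreover have "prj x \<in> emb (loc x) -` S" using x by simp
    ultimately have "prj x \<in> emb (loc x) -` S'" using h by blast
    then show "x \<in> S'" by simp
  qed
qed auto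

lemma single_decomp:
  assumes "S \<subseteq> {a. loc a \<in> V}"
  shows "(\<exists>a. S = {a}) \<longleftrightarrow> (\<exists>v\<in>V. (\<exists>c. emb v -` S = {c}) \<and> (\<forall>v'\<in>V. v' \<noteq> v \<longrightarrow> emb v' -` S = {}))"
proof
  assume "\<exists>a. S = {a}"
  then obtain a where a: "S = {a}" by blast
  have e1: "emb (loc a) x = a \<longleftrightarrow> x = prj a" for x by (metis emb_loc_prj prj_emb)
  have e2: "v' \<noteq> loc a \<Longrightarrow> emb v' x \<noteq> a" for x v' by (metis loc_emb)
  have "emb (loc a) -` S = {prj a}" using a e1 by blast
  moreover have "\<forall>v'\<in>V. v' \<noteq> loc a \<longrightarrow> emb v' -` S = {}" using a e2 by blast
  moreover have "loc a \<in> V" using a assms by auto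
  ultimately show "\<exists>v\<in>V. (\<exists>c. emb v -` S = {c}) \<and> (\<forall>v'\<in>V. v' \<noteq> v \<longrightarrow> emb v' -` S = {})"
    by blast
next
  assume "\<exists>v\<in>V. (\<exists>c. emb v -` S = {c}) \<and> (\<forall>v'\<in>V. v' \<noteq> v \<longrightarrow> emb v' -` S = {})"
  then obtain v c where v: "v \<in> V" "emb v -` S = {c}" "\<forall>v'\<in>V. v' \<noteq> v \<longrightarrow> emb v' -` S = {}"
    by blast
  have "S = {emb v c}"
  proof
    show "S \<subseteq> {emb v c}"
    proof
      fix x assume x: "x \<in> S"
      then have lx: "loc x \<in> V" using assms by auto
      have px: "prj x \<in> emb (loc x) -` S" using x by simp
      show "x \<in> {emb v c}"
      proof (cases "loc x = v")
        case True then show ?thesis using px v(2) by (metis emb_loc_prj singletonD singletonI)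
      next
        case False then show ?thesis using px v(3) lx by blast
      qed
    qed
    show "{emb v c} \<subseteq> S" using v(2) by auto
  qed
  then show "\<exists>a. S = {a}" by blast
qed

lemma card_decomp:
  assumes "finite V" "finite S" "S \<subseteq> {a. loc a \<in> V}"
  shows "card S = (\<Sum>v\<in>V. card (emb v -` S))"
proof -
  have eq: "S = (\<Union>v\<in>V. emb v ` (emb v -` S))"
  proof
    show "S \<subseteq> (\<Union>v\<in>V. emb v ` (emb v -` S))"
    proof
      fix x assume x: "x \<in> S"
      then have "loc x \<in> V" using assms(3) by auto
      moreover have "x = emb (loc x) (prj x)" by simp
      moreover have "prj x \<in> emb (loc x) -` S" using x by simp
      ultimately show "x \<in> (\<Union>v\<in>V. emb v ` (emb v -` S))" by blast
    qed
  qed auto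
  have "card (\<Union>v\<in>V. emb v ` (emb v -` S)) = (\<Sum>v\<in>V. card (emb v ` (emb v -` S)))"
    by (rule card_UN_disjoint)
       (use assms in \<open>auto intro: finite_vimageI inj_emb\<close>)
  also have "\<dots> = (\<Sum>v\<in>V. card (emb v -` S))"
    by (rule sum.cong[OF refl]) (meson card_image inj_emb inj_on_subset subset_UNIV)
  finally show ?thesis using eq by simp
qed


definition cfg :: "('x \<Rightarrow> nat) \<Rightarrow> ('w, 'x) hg \<Rightarrow> nat set \<Rightarrow> nat \<Rightarrow> nat set \<Rightarrow> nat set
   \<Rightarrow> ('x \<Rightarrow> ('v \<times> nat, 'a + nat) model) \<Rightarrow> (nat \<Rightarrow> ('w \<times> 'v) \<times> nat) \<Rightarrow> (nat \<Rightarrow> (('w \<times> 'v) \<times> nat) set)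
   \<Rightarrow> ('x \<Rightarrow> ('v \<times> nat, 'a + nat) model) \<Rightarrow> (nat \<Rightarrow> ('w \<times> 'v) \<times> nat) \<Rightarrow> (nat \<Rightarrow> (('w \<times> 'v) \<times> nat) set)
   \<Rightarrow> bool" where
  "cfg arX G M r F SV m al SA m' be SB \<longleftrightarrow>
     finite (hverts G) \<and>
     (\<forall>v\<in>hverts G. finite (univ (m (hlab G v))) \<and> finite (univ (m' (hlab G v)))) \<and>
     (\<forall>i\<in>F. al i \<in> univ (compose arX G m) \<and> be i \<in> univ (compose arX G m') \<and> loc (be i) = loc (al i)) \<and>
     (\<forall>j\<in>SV. SA j \<subseteq> univ (compose arX G m) \<and> SB j \<subseteq> univ (compose arX G m')) \<and>
     (\<forall>v\<in>hverts G. eqv r M {i\<in>F. loc (al i) = v} SV (m (hlab G v)) (prj \<circ> al) (sc v SA)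
                       (m' (hlab G v)) (prj \<circ> be) (sc v SB))"

lemma cfg_sym:
  assumes "cfg arX G M r F SV m al SA m' be SB"
  shows "cfg arX G M r F SV m' be SB m al SA"
proof -
  have "{i\<in>F. loc (be i) = v} = {i\<in>F. loc (al i) = v}" for v
    using assms unfolding cfg_def by auto
  then show ?thesis using assms unfolding cfg_def by (auto intro: eqv_sym)
qed

lemma cfgD:
  assumes "cfg arX G M r F SV m al SA m' be SB"
  shows "finite (hverts G)"
    "v \<in> hverts G \<Longrightarrow> finite (univ (m (hlab G v)))"
    "v \<in> hverts G \<Longrightarrow> finite (univ (m' (hlab G v)))"
    "i \<in> F \<Longrightarrow> al i \<in> univ (compose arX G m)"
    "i \<in> F \<Longrightarrow> be i \<in> univ (compose arX G m')"
    "i \<in> F \<Longrightarrow> loc (be i) = loc (al i)"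
    "j \<in> SV \<Longrightarrow> SA j \<subseteq> univ (compose arX G m)"
    "j \<in> SV \<Longrightarrow> SB j \<subseteq> univ (compose arX G m')"
    "v \<in> hverts G \<Longrightarrow> eqv r M {i\<in>F. loc (al i) = v} SV (m (hlab G v)) (prj \<circ> al) (sc v SA)
                       (m' (hlab G v)) (prj \<circ> be) (sc v SB)"
  using assms unfolding cfg_def by auto

lemma cfg_comp:
  assumes "cfg arX G M r F SV m al SA m' be SB" "v \<in> hverts G"
    "good r M {i\<in>F. loc (al i) = v} SV \<psi>"
  shows "sat (m (hlab G v)) (prj \<circ> al) (sc v SA) \<psi> = sat (m' (hlab G v)) (prj \<circ> be) (sc v SB) \<psi>"
  using eqvD[OF cfgD(9)[OF assms(1,2)] assms(3)] .

lemma finite_compose_univ: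
  assumes "finite (hverts G)" "\<forall>v\<in>hverts G. finite (univ (m (hlab G v)))"
  shows "finite (univ (compose arX G m))"
proof -
  have "univ (compose arX G m) \<subseteq> (\<Union>v\<in>hverts G. emb v ` univ (m (hlab G v)))"
  proof
    fix a assume "a \<in> univ (compose arX G m)"
    then have "loc a \<in> hverts G" "prj a \<in> univ (m (hlab G (loc a)))" by (auto simp: compose_univ)
    then show "a \<in> (\<Union>v\<in>hverts G. emb v ` univ (m (hlab G v)))"
      by (metis UN_I emb_loc_prj image_eqI)
  qed
  moreover have "finite (\<Union>v\<in>hverts G. emb v ` univ (m (hlab G v)))" using assms by auto
  ultimately show ?thesis by (rule finite_subset)
qed


lemma main:
  fixes m m' :: "'x \<Rightarrow> ('v \<times> nat, 'a + nat) model" and G :: "('w, 'x) hg"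
  shows "cfg arX G M r F SV m al SA m' be SB \<Longrightarrow> good r M F SV \<phi> \<Longrightarrow>
   sat (compose arX G m) al SA \<phi> = sat (compose arX G m') be SB \<phi>"
proof (induction \<phi> arbitrary: r F SV m al SA m' be SB)
  case (Eq i j)
  note su = Eq.prems(1)
  have ij: "i \<in> F" "j \<in> F" using Eq.prems(2) by (auto simp: good_def)
  have vi: "loc (al i) \<in> hverts G" using cfgD(4)[OF su ij(1)] by (simp add: compose_univ)
  show ?case
  proof (cases "loc (al i) = loc (al j)")
    case True
    have g: "good r M {i'\<in>F. loc (al i') = loc (al i)} SV (Eq i j)" using ij True by (auto simp: good_def)
    from cfg_comp[OF su vi g] have "(prj (al i) = prj (al j)) = (prj (be i) = prj (be j))" by simp
    then show ?thesis using True cfgD(6)[OF su ij(1)] cfgD(6)[OF su ij(2)]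
      by (simp add: eq_loc_prj[of "al i"] eq_loc_prj[of "be i"])
  next
    case False
    then show ?thesis using cfgD(6)[OF su ij(1)] cfgD(6)[OF su ij(2)]
      by (simp add: eq_loc_prj[of "al i"] eq_loc_prj[of "be i"])
  qed
next
  case (Edge i j)
  note su = Edge.prems(1)
  have ij: "i \<in> F" "j \<in> F" using Edge.prems(2) by (auto simp: good_def)
  have vi: "loc (al i) \<in> hverts G" using cfgD(4)[OF su ij(1)] by (simp add: compose_univ)
  have vj: "loc (al j) \<in> hverts G" using cfgD(4)[OF su ij(2)] by (simp add: compose_univ)
  have P1: "loc (al i) = loc (al j) \<Longrightarrow> ((prj (al i), prj (al j)) \<in> brel (m (hlab G (loc (al i))))) =
       ((prj (be i), prj (be j)) \<in> brel (m' (hlab G (loc (al i)))))"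
  proof -
    assume True: "loc (al i) = loc (al j)"
    have g: "good r M {i'\<in>F. loc (al i') = loc (al i)} SV (Edge i j)" using ij True by (auto simp: good_def)
    from cfg_comp[OF su vi g] show ?thesis by simp
  qed
  have P2: "(prj (al i) \<in> upred (m (hlab G (loc (al i)))) (Inr p)) = (prj (be i) \<in> upred (m' (hlab G (loc (al i)))) (Inr p))" for p
  proof -
    have g: "good r M {i'\<in>F. loc (al i') = loc (al i)} SV (Pred (Inr p) i)" using ij by (auto simp: good_def)
    from cfg_comp[OF su vi g] show ?thesis by simp
  qed
  have P3: "(prj (al j) \<in> upred (m (hlab G (loc (al j)))) (Inr p)) = (prj (be j) \<in> upred (m' (hlab G (loc (al j)))) (Inr p))" for p
  proof -
    have g: "good r M {i'\<in>F. loc (al i') = loc (al j)} SV (Pred (Inr p) j)" using ij by (auto simp: good_def)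
    from cfg_comp[OF su vj g] show ?thesis by simp
  qed
  have U: "al i \<in> univ (compose arX G m)" "al j \<in> univ (compose arX G m)"
     "be i \<in> univ (compose arX G m')" "be j \<in> univ (compose arX G m')"
    using cfgD(4,5)[OF su] ij by auto
  have L: "loc (be i) = loc (al i)" "loc (be j) = loc (al j)" using cfgD(6)[OF su] ij by auto
  show ?case
    unfolding sat.simps compose_brel L using U P1 P2 P3 by auto
next
  case (Pred q i)
  note su = Pred.prems(1)
  have ij: "i \<in> F" using Pred.prems(2) by (auto simp: good_def)
  have vi: "loc (al i) \<in> hverts G" using cfgD(4)[OF su ij(1)] by (simp add: compose_univ)
  have U: "al i \<in> univ (compose arX G m)" "be i \<in> univ (compose arX G m')"
    using cfgD(4,5)[OF su] ij by auto
  have L: "loc (be i) = loc (al i)" using cfgD(6)[OF su] ij by auto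
  have P: "(prj (al i) \<in> upred (m (hlab G (loc (al i)))) q') = (prj (be i) \<in> upred (m' (hlab G (loc (al i)))) q')" for q'
  proof -
    have g: "good r M {i'\<in>F. loc (al i') = loc (al i)} SV (Pred q' i)" using ij by (auto simp: good_def)
    from cfg_comp[OF su vi g] show ?thesis by simp
  qed
  show ?case
  proof (cases q)
    case (Inl s)
    then show ?thesis using U P L by (simp add: compose_upred_Inl)
  next
    case (Inr k)
    then show ?thesis using U P L by (simp add: compose_upred_Inr)
  qed
next
  case (Mem i T)
  note su = Mem.prems(1)
  have ij: "i \<in> F" and sv: "svars_t T \<subseteq> SV" using Mem.prems(2) by (auto simp: good_def)
  have vi: "loc (al i) \<in> hverts G" using cfgD(4)[OF su ij(1)] by (simp add: compose_univ)
  have U: "al i \<in> univ (compose arX G m)" "be i \<in> univ (compose arX G m')"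
    using cfgD(4,5)[OF su] ij by auto
  have L: "loc (be i) = loc (al i)" using cfgD(6)[OF su] ij by auto
  have SA: "\<forall>j\<in>svars_t T. SA j \<subseteq> univ (compose arX G m)" using cfgD(7)[OF su] sv by auto
  have SB: "\<forall>j\<in>svars_t T. SB j \<subseteq> univ (compose arX G m')" using cfgD(8)[OF su] sv by auto
  have g: "good r M {i'\<in>F. loc (al i') = loc (al i)} SV (Mem i (trS arX G (loc (al i)) T))"
    using ij sv by (auto simp: good_def)
  from cfg_comp[OF su vi g]
  show ?case unfolding sat.simps sval_comp[OF SA] sval_comp[OF SB] L using U by simp
next
  case (CardMod T k mm)
  note su = CardMod.prems(1)
  have sv: "svars_t T \<subseteq> SV" and mmM: "mm \<in> M" using CardMod.prems(2) by (auto simp: good_def)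
  have SA: "\<forall>j\<in>svars_t T. SA j \<subseteq> univ (compose arX G m)" using cfgD(7)[OF su] sv by auto
  have SB: "\<forall>j\<in>svars_t T. SB j \<subseteq> univ (compose arX G m')" using cfgD(8)[OF su] sv by auto
  define XA where "XA = sval (compose arX G m) SA T"
  define XB where "XB = sval (compose arX G m') SB T"
  have finV: "finite (hverts G)" using cfgD(1)[OF su] .
  have fA: "finite (univ (compose arX G m))"
    using finite_compose_univ[OF finV] cfgD(2)[OF su] by blast
  have fB: "finite (univ (compose arX G m'))"
    using finite_compose_univ[OF finV] cfgD(3)[OF su] by blast
  have XAs: "XA \<subseteq> univ (compose arX G m)" unfolding XA_def by (rule sval_comp_sub[OF SA])
  have XBs: "XB \<subseteq> univ (compose arX G m')" unfolding XB_def by (rule sval_comp_sub[OF SB])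
  have fXA: "finite XA" using XAs fA finite_subset by blast
  have fXB: "finite XB" using XBs fB finite_subset by blast
  have lA: "XA \<subseteq> {a. loc a \<in> hverts G}" using XAs by (auto simp: compose_univ)
  have lB: "XB \<subseteq> {a. loc a \<in> hverts G}" using XBs by (auto simp: compose_univ)
  have cA: "card XA = (\<Sum>v\<in>hverts G. card (emb v -` XA))" by (rule card_decomp[OF finV fXA lA])
  have cB: "card XB = (\<Sum>v\<in>hverts G. card (emb v -` XB))" by (rule card_decomp[OF finV fXB lB])
  have comp: "card (emb v -` XA) mod mm = card (emb v -` XB) mod mm" if v: "v \<in> hverts G" for v
  proof -
    have eA: "emb v -` XA = sval (m (hlab G v)) (sc v SA) (trS arX G v T)"
      unfolding XA_def by (rule sval_comp_vimage[OF SA v])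
    have eB: "emb v -` XB = sval (m' (hlab G v)) (sc v SB) (trS arX G v T)"
      unfolding XB_def by (rule sval_comp_vimage[OF SB v])
    have g: "good r M {i'\<in>F. loc (al i') = v} SV (CardMod (trS arX G v T) (card (emb v -` XA)) mm)"
      using sv mmM by (auto simp: good_def)
    have "finite (emb v -` XA)" using fXA by (rule finite_vimageI) (rule inj_emb)
    then have "sat (m (hlab G v)) (prj \<circ> al) (sc v SA) (CardMod (trS arX G v T) (card (emb v -` XA)) mm)"
      using eA by simp
    then have "sat (m' (hlab G v)) (prj \<circ> be) (sc v SB) (CardMod (trS arX G v T) (card (emb v -` XA)) mm)"
      using cfg_comp[OF su v g] by simp
    then show ?thesis using eB by simp
  qed
  have "card XA mod mm = card XB mod mm"
  proof -
    have "card XA mod mm = (\<Sum>v\<in>hverts G. card (emb v -` XA) mod mm) mod mm"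
      unfolding cA by (simp add: mod_sum_eq)
    also have "\<dots> = (\<Sum>v\<in>hverts G. card (emb v -` XB) mod mm) mod mm"
      using comp by (simp cong: sum.cong)
    also have "\<dots> = card XB mod mm"
      unfolding cB by (simp add: mod_sum_eq)
    finally show ?thesis .
  qed
  then show ?case using fXA fXB unfolding sat.simps XA_def[symmetric] XB_def[symmetric] by simp
next
  case (Subset T T')
  note su = Subset.prems(1)
  have sv: "svars_t T \<subseteq> SV" "svars_t T' \<subseteq> SV" using Subset.prems(2) by (auto simp: good_def)
  have SA: "\<forall>j\<in>svars_t T. SA j \<subseteq> univ (compose arX G m)" "\<forall>j\<in>svars_t T'. SA j \<subseteq> univ (compose arX G m)"
    using cfgD(7)[OF su] sv by auto
  have SB: "\<forall>j\<in>svars_t T. SB j \<subseteq> univ (compose arX G m')" "\<forall>j\<in>svars_t T'. SB j \<subseteq> univ (compose arX G m')"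
    using cfgD(8)[OF su] sv by auto
  have lA: "sval (compose arX G m) SA T \<subseteq> {a. loc a \<in> hverts G}"
    using sval_comp_sub[OF SA(1)] by (auto simp: compose_univ)
  have lB: "sval (compose arX G m') SB T \<subseteq> {a. loc a \<in> hverts G}"
    using sval_comp_sub[OF SB(1)] by (auto simp: compose_univ)
  have comp: "(sval (m (hlab G v)) (sc v SA) (trS arX G v T) \<subseteq> sval (m (hlab G v)) (sc v SA) (trS arX G v T')) =
              (sval (m' (hlab G v)) (sc v SB) (trS arX G v T) \<subseteq> sval (m' (hlab G v)) (sc v SB) (trS arX G v T'))"
    if v: "v \<in> hverts G" for v
  proof -
    have g: "good r M {i'\<in>F. loc (al i') = v} SV (Subset (trS arX G v T) (trS arX G v T'))"
      using sv by (auto simp: good_def)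
    from cfg_comp[OF su v g] show ?thesis by simp
  qed
  show ?case unfolding sat.simps subset_decomp[OF lA] subset_decomp[OF lB]
    using comp sval_comp_vimage[OF SA(1)] sval_comp_vimage[OF SA(2)]
      sval_comp_vimage[OF SB(1)] sval_comp_vimage[OF SB(2)] by simp
next
  case (Single T)
  note su = Single.prems(1)
  have sv: "svars_t T \<subseteq> SV" using Single.prems(2) by (auto simp: good_def)
  have SA: "\<forall>j\<in>svars_t T. SA j \<subseteq> univ (compose arX G m)" using cfgD(7)[OF su] sv by auto
  have SB: "\<forall>j\<in>svars_t T. SB j \<subseteq> univ (compose arX G m')" using cfgD(8)[OF su] sv by auto
  have lA: "sval (compose arX G m) SA T \<subseteq> {a. loc a \<in> hverts G}"
    using sval_comp_sub[OF SA] by (auto simp: compose_univ)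
  have lB: "sval (compose arX G m') SB T \<subseteq> {a. loc a \<in> hverts G}"
    using sval_comp_sub[OF SB] by (auto simp: compose_univ)
  have c1: "(\<exists>c. sval (m (hlab G v)) (sc v SA) (trS arX G v T) = {c}) =
            (\<exists>c. sval (m' (hlab G v)) (sc v SB) (trS arX G v T) = {c})"
    if v: "v \<in> hverts G" for v
  proof -
    have g: "good r M {i'\<in>F. loc (al i') = v} SV (Single (trS arX G v T))"
      using sv by (auto simp: good_def)
    from cfg_comp[OF su v g] show ?thesis by simp
  qed
  have c2: "(sval (m (hlab G v)) (sc v SA) (trS arX G v T) = {}) =
            (sval (m' (hlab G v)) (sc v SB) (trS arX G v T) = {})"
    if v: "v \<in> hverts G" for v
  proof -
    have g: "good r M {i'\<in>F. loc (al i') = v} SV (Subset (trS arX G v T) (SConst (QNot QEq)))"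
      using sv by (auto simp: good_def)
    from cfg_comp[OF su v g] show ?thesis by simp
  qed
  have eA: "\<And>v. v \<in> hverts G \<Longrightarrow> emb v -` sval (compose arX G m) SA T = sval (m (hlab G v)) (sc v SA) (trS arX G v T)"
    by (rule sval_comp_vimage[OF SA])
  have eB: "\<And>v. v \<in> hverts G \<Longrightarrow> emb v -` sval (compose arX G m') SB T = sval (m' (hlab G v)) (sc v SB) (trS arX G v T)"
    by (rule sval_comp_vimage[OF SB])
  show ?case unfolding sat.simps single_decomp[OF lA] single_decomp[OF lB]
  proof (rule bex_cong[OF refl])
    fix v assume v: "v \<in> hverts G"
    show "((\<exists>c. emb v -` sval (compose arX G m) SA T = {c}) \<and>
          (\<forall>v'\<in>hverts G. v' \<noteq> v \<longrightarrow> emb v' -` sval (compose arX G m) SA T = {})) =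
         ((\<exists>c. emb v -` sval (compose arX G m') SB T = {c}) \<and>
          (\<forall>v'\<in>hverts G. v' \<noteq> v \<longrightarrow> emb v' -` sval (compose arX G m') SB T = {}))"
      using c1[OF v] c2 eA eB v by auto
  qed
next
  case (Neg \<phi>)
  have "good r M F SV \<phi>" using Neg.prems(2) by (auto simp: good_def)
  then show ?case using Neg.IH[OF Neg.prems(1)] by simp
next
  case (Conj \<phi>1 \<phi>2)
  have "good r M F SV \<phi>1" "good r M F SV \<phi>2" using Conj.prems(2) by (auto simp: good_def)
  then show ?case using Conj.IH(1)[OF Conj.prems(1)] Conj.IH(2)[OF Conj.prems(1)] by simp
next
  case (ExFO i \<phi>)
  obtain r' where r: "r = Suc r'" and g: "good r' M (insert i F) SV \<phi>"
    using ExFO.prems(2) by (cases r) (auto simp: good_def)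
  have dir: "sat (compose arX G m1) al1 SA1 (ExFO i \<phi>) \<Longrightarrow> sat (compose arX G m2) be2 SB2 (ExFO i \<phi>)"
    if su: "cfg arX G M r F SV m1 al1 SA1 m2 be2 SB2" for m1 m2 :: "'x \<Rightarrow> ('v \<times> nat, 'a + nat) model" and al1 be2 SA1 SB2
  proof -
    assume "sat (compose arX G m1) al1 SA1 (ExFO i \<phi>)"
    then obtain a where a: "a \<in> univ (compose arX G m1)" "sat (compose arX G m1) (al1(i:=a)) SA1 \<phi>"
      by auto
    define v0 where "v0 = loc a"
    have v0: "v0 \<in> hverts G" "prj a \<in> univ (m1 (hlab G v0))" using a(1) by (auto simp: compose_univ v0_def)
    have e0: "eqv (Suc r') M {i'\<in>F. loc (al1 i') = v0} SV (m1 (hlab G v0)) (prj \<circ> al1) (sc v0 SA1)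
                       (m2 (hlab G v0)) (prj \<circ> be2) (sc v0 SB2)"
      using cfgD(9)[OF su v0(1)] r by simp
    obtain d where d: "d \<in> univ (m2 (hlab G v0))"
      "eqv r' M (insert i {i'\<in>F. loc (al1 i') = v0}) SV (m1 (hlab G v0)) ((prj \<circ> al1)(i := prj a)) (sc v0 SA1)
                       (m2 (hlab G v0)) ((prj \<circ> be2)(i := d)) (sc v0 SB2)"
      using ex_fo[OF cfgD(3)[OF su v0(1)] e0 v0(2)] by blast
    define b where "b = emb v0 d"
    have b: "b \<in> univ (compose arX G m2)" using v0(1) d(1) by (simp add: b_def compose_univ)
    have pa: "prj \<circ> al1(i := a) = (prj \<circ> al1)(i := prj a)" by (rule ext) simp
    have pb: "prj \<circ> be2(i := b) = (prj \<circ> be2)(i := d)" by (rule ext) (simp add: b_def)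
    have su': "cfg arX G M r' (insert i F) SV m1 (al1(i:=a)) SA1 m2 (be2(i:=b)) SB2"
      unfolding cfg_def
    proof (intro conjI ballI)
      show "finite (hverts G)" using cfgD(1)[OF su] .
    next
      fix v assume "v \<in> hverts G"
      then show "finite (univ (m1 (hlab G v)))" "finite (univ (m2 (hlab G v)))"
        using cfgD(2,3)[OF su] by auto
    next
      fix i' assume "i' \<in> insert i F"
      then show "(al1(i := a)) i' \<in> univ (compose arX G m1)" "(be2(i := b)) i' \<in> univ (compose arX G m2)"
        "loc ((be2(i := b)) i') = loc ((al1(i := a)) i')"
        using a(1) b cfgD(4,5,6)[OF su] by (auto simp: b_def v0_def)
    next
      fix j assume "j \<in> SV"
      then show "SA1 j \<subseteq> univ (compose arX G m1)" "SB2 j \<subseteq> univ (compose arX G m2)"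
        using cfgD(7,8)[OF su] by auto
    next
      fix v assume v: "v \<in> hverts G"
      show "eqv r' M {i' \<in> insert i F. loc ((al1(i := a)) i') = v} SV (m1 (hlab G v)) (prj \<circ> al1(i := a))
              (sc v SA1) (m2 (hlab G v)) (prj \<circ> be2(i := b)) (sc v SB2)"
      proof (cases "v = v0")
        case True
        have "{i' \<in> insert i F. loc ((al1(i := a)) i') = v} = insert i {i'\<in>F. loc (al1 i') = v0}"
          using True by (auto simp: v0_def)
        then show ?thesis using d(2) pa pb True by simp
      next
        case False
        have "{i' \<in> insert i F. loc ((al1(i := a)) i') = v} = {i'\<in>F. loc (al1 i') = v} - {i}"
          using False by (auto simp: v0_def)
        moreover have "eqv r' M ({i'\<in>F. loc (al1 i') = v} - {i}) SV (m1 (hlab G v)) ((prj \<circ> al1)(i := prj a))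
              (sc v SA1) (m2 (hlab G v)) ((prj \<circ> be2)(i := d)) (sc v SB2)"
          by (rule eqv_upd[OF cfgD(9)[OF su v]]) (auto simp: r)
        ultimately show ?thesis using pa pb by simp
      qed
    qed
    have "sat (compose arX G m2) (be2(i:=b)) SB2 \<phi>"
      using ExFO.IH[OF su' g] a(2) by (simp only:)
    then show ?thesis using b by auto
  qed
  show ?case using dir[OF ExFO.prems(1)] dir[OF cfg_sym[OF ExFO.prems(1)]] by blast
next
  case (ExSO j \<phi>)
  obtain r' where r: "r = Suc r'" and g: "good r' M F (insert j SV) \<phi>"
    using ExSO.prems(2) by (cases r) (auto simp: good_def)
  have dir: "sat (compose arX G m1) al1 SA1 (ExSO j \<phi>) \<Longrightarrow> sat (compose arX G m2) be2 SB2 (ExSO j \<phi>)"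
    if su: "cfg arX G M r F SV m1 al1 SA1 m2 be2 SB2" for m1 m2 :: "'x \<Rightarrow> ('v \<times> nat, 'a + nat) model" and al1 be2 SA1 SB2
  proof -
    assume "sat (compose arX G m1) al1 SA1 (ExSO j \<phi>)"
    then obtain X where X: "X \<subseteq> univ (compose arX G m1)" "sat (compose arX G m1) al1 (SA1(j:=X)) \<phi>"
      by auto
    have "\<forall>v\<in>hverts G. \<exists>Y. Y \<subseteq> univ (m2 (hlab G v)) \<and>
       eqv r' M {i'\<in>F. loc (al1 i') = v} (insert j SV) (m1 (hlab G v)) (prj \<circ> al1) ((sc v SA1)(j := emb v -` X))
                       (m2 (hlab G v)) (prj \<circ> be2) ((sc v SB2)(j := Y))"
    proof
      fix v assume v: "v \<in> hverts G"
      have e0: "eqv (Suc r') M {i'\<in>F. loc (al1 i') = v} SV (m1 (hlab G v)) (prj \<circ> al1) (sc v SA1)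
                       (m2 (hlab G v)) (prj \<circ> be2) (sc v SB2)"
        using cfgD(9)[OF su v] r by simp
      have "emb v -` X \<subseteq> univ (m1 (hlab G v))"
      proof
        fix c assume "c \<in> emb v -` X"
        then have "emb v c \<in> univ (compose arX G m1)" using X(1) by blast
        then show "c \<in> univ (m1 (hlab G v))" by (simp only: compose_univ loc_emb prj_emb)
      qed
      from ex_so[OF cfgD(3)[OF su v] e0 this]
      show "\<exists>Y. Y \<subseteq> univ (m2 (hlab G v)) \<and>
       eqv r' M {i'\<in>F. loc (al1 i') = v} (insert j SV) (m1 (hlab G v)) (prj \<circ> al1) ((sc v SA1)(j := emb v -` X))
                       (m2 (hlab G v)) (prj \<circ> be2) ((sc v SB2)(j := Y))" .
    qed
    then obtain Yf where Yf: "\<forall>v\<in>hverts G. Yf v \<subseteq> univ (m2 (hlab G v)) \<and>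
       eqv r' M {i'\<in>F. loc (al1 i') = v} (insert j SV) (m1 (hlab G v)) (prj \<circ> al1) ((sc v SA1)(j := emb v -` X))
                       (m2 (hlab G v)) (prj \<circ> be2) ((sc v SB2)(j := Yf v))"
      by (rule bchoice[THEN exE])
    define Y where "Y = {b. loc b \<in> hverts G \<and> prj b \<in> Yf (loc b)}"
    have Ysub: "Y \<subseteq> univ (compose arX G m2)"
    proof
      fix b assume "b \<in> Y"
      then have "loc b \<in> hverts G" "prj b \<in> Yf (loc b)" by (auto simp: Y_def)
      then show "b \<in> univ (compose arX G m2)" using Yf by (auto simp: compose_univ)
    qed
    have scA: "sc v (SA1(j := X)) = (sc v SA1)(j := emb v -` X)" for v by (rule ext) (simp add: sc_def)
    have scB: "v \<in> hverts G \<Longrightarrow> sc v (SB2(j := Y)) = (sc v SB2)(j := Yf v)" for v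
    proof (rule ext)
      fix j' assume v: "v \<in> hverts G"
      have "emb v -` Y = Yf v" using v by (auto simp: Y_def)
      then show "sc v (SB2(j := Y)) j' = ((sc v SB2)(j := Yf v)) j'" by (simp add: sc_def)
    qed
    have su': "cfg arX G M r' F (insert j SV) m1 al1 (SA1(j:=X)) m2 be2 (SB2(j:=Y))"
      unfolding cfg_def
    proof (intro conjI ballI)
      show "finite (hverts G)" using cfgD(1)[OF su] .
    next
      fix v assume "v \<in> hverts G"
      then show "finite (univ (m1 (hlab G v)))" "finite (univ (m2 (hlab G v)))"
        using cfgD(2,3)[OF su] by auto
    next
      fix i' assume "i' \<in> F"
      then show "al1 i' \<in> univ (compose arX G m1)" "be2 i' \<in> univ (compose arX G m2)"
        "loc (be2 i') = loc (al1 i')"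
        using cfgD(4,5,6)[OF su] by auto
    next
      fix j' assume "j' \<in> insert j SV"
      then show "(SA1(j := X)) j' \<subseteq> univ (compose arX G m1)" "(SB2(j := Y)) j' \<subseteq> univ (compose arX G m2)"
        using cfgD(7,8)[OF su] X(1) Ysub by auto
    next
      fix v assume v: "v \<in> hverts G"
      show "eqv r' M {i' \<in> F. loc (al1 i') = v} (insert j SV) (m1 (hlab G v)) (prj \<circ> al1)
              (sc v (SA1(j := X))) (m2 (hlab G v)) (prj \<circ> be2) (sc v (SB2(j := Y)))"
        using Yf v scA scB[OF v] by simp
    qed
    have "sat (compose arX G m2) be2 (SB2(j:=Y)) \<phi>"
      using ExSO.IH[OF su' g] X(2) by (simp only:)
    then show ?thesis using Ysub by auto
  qed
  show ?case using dir[OF ExSO.prems(1)] dir[OF cfg_sym[OF ExSO.prems(1)]] by blast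
qed


lemma finite_corners: "finite (hverts K) \<Longrightarrow> finite (corners ar K)"
proof -
  assume f: "finite (hverts K)"
  have "corners ar K \<subseteq> (SIGMA v:hverts K. {1..ar (hlab K v)})" by (auto simp: corners_def)
  moreover have "finite (SIGMA v:hverts K. {1..ar (hlab K v)})" using f by auto
  ultimately show ?thesis by (rule finite_subset)
qed

lemma flat_univ:
  "univ (compose arX G (\<lambda>x. to_model arS (\<eta> x))) = corners arS (flatten arS G \<eta>)"
  by (auto simp: compose_def to_model_def corners_def flatten_def Let_def loc_def prj_def)

lemma flat_brel:
  assumes val: "valuation S arS X arX \<eta>" and G: "wf_hg X arX G"
  shows "brel (compose arX G (\<lambda>x. to_model arS (\<eta> x))) = hedge (flatten arS G \<eta>)"
proof -
  have hp: "1 \<le> hport (\<eta> (hlab G v)) c \<and> hport (\<eta> (hlab G v)) c \<le> arX (hlab G v)"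
    if "v \<in> hverts G" "c \<in> corners arS (\<eta> (hlab G v))" for v c
  proof -
    have "hlab G v \<in> X" using G that(1) by (auto simp: wf_hg_def)
    then have "wf_hg S arS (\<eta> (hlab G v))" "harity (\<eta> (hlab G v)) = arX (hlab G v)"
      using val by (auto simp: valuation_def)
    then show ?thesis using that(2) by (auto simp: wf_hg_def)
  qed
  have ar: "harity (\<eta> (hlab G v)) = arX (hlab G v)" if "v \<in> hverts G" for v
  proof -
    have "hlab G v \<in> X" using G that(1) by (auto simp: wf_hg_def)
    then show ?thesis using val by (auto simp: valuation_def)
  qed
  show ?thesis
  proof (intro set_eqI iffI)
    fix e assume e: "e \<in> brel (compose arX G (\<lambda>x. to_model arS (\<eta> x)))"
    obtain v w i v' w' i' where eq: "e = (((v, w), i), ((v', w'), i'))" by (metis prod.collapse)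
    show "e \<in> hedge (flatten arS G \<eta>)"
      using e unfolding eq compose_brel flat_univ
      by (auto simp: to_model_def flatten_def Let_def corners_def)
  next
    fix e assume e: "e \<in> hedge (flatten arS G \<eta>)"
    obtain v w i v' w' i' where eq: "e = (((v, w), i), ((v', w'), i'))" by (metis prod.collapse)
    have c1: "(w, i) \<in> corners arS (\<eta> (hlab G v))" "v \<in> hverts G"
      and c2: "(w', i') \<in> corners arS (\<eta> (hlab G v'))" "v' \<in> hverts G"
      using e unfolding eq by (auto simp: flatten_def Let_def corners_def)
    show "e \<in> brel (compose arX G (\<lambda>x. to_model arS (\<eta> x)))"
      using e hp[OF c1(2,1)] hp[OF c2(2,1)] ar[OF c1(2)] ar[OF c2(2)] c1 c2 unfolding eq compose_brel flat_univ
      by (auto simp: to_model_def flatten_def Let_def corners_def)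
  qed
qed

lemma flat_upred:
  fixes G :: "('w, 'x) hg" and \<eta> :: "'x \<Rightarrow> ('v, 's) hg"
  assumes val: "valuation S arS X arX \<eta>" and G: "wf_hg X arX G"
  shows "upred (compose arX G (\<lambda>x. to_model arS (\<eta> x))) q = upred (to_model arS (flatten arS G \<eta>)) q"
proof -
  have hp: "1 \<le> hport (\<eta> (hlab G v)) c \<and> hport (\<eta> (hlab G v)) c \<le> arX (hlab G v)"
    if "v \<in> hverts G" "c \<in> corners arS (\<eta> (hlab G v))" for v c
  proof -
    have "hlab G v \<in> X" using G that(1) by (auto simp: wf_hg_def)
    then have "wf_hg S arS (\<eta> (hlab G v))" "harity (\<eta> (hlab G v)) = arX (hlab G v)"
      using val by (auto simp: valuation_def)
    then show ?thesis using that(2) by (auto simp: wf_hg_def)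
  qed
  have ar: "harity (\<eta> (hlab G v)) = arX (hlab G v)" if "v \<in> hverts G" for v
  proof -
    have "hlab G v \<in> X" using G that(1) by (auto simp: wf_hg_def)
    then show ?thesis using val by (auto simp: valuation_def)
  qed
  show ?thesis
  proof (intro set_eqI)
    fix a :: "('w \<times> 'v) \<times> nat"
    obtain v w i where eq: "a = ((v, w), i)" by (metis prod.collapse)
    show "a \<in> upred (compose arX G (\<lambda>x. to_model arS (\<eta> x))) q \<longleftrightarrow> a \<in> upred (to_model arS (flatten arS G \<eta>)) q"
    proof (cases q)
      case (Inl s)
      then show ?thesis unfolding eq Inl compose_upred_Inl flat_univ
        by (cases s) (auto simp: to_model_def flatten_def Let_def corners_def)
    next
      case (Inr k)
      show ?thesis
      proof
        assume "a \<in> upred (compose arX G (\<lambda>x. to_model arS (\<eta> x))) q"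
        then show "a \<in> upred (to_model arS (flatten arS G \<eta>)) q"
          unfolding eq Inr compose_upred_Inr flat_univ
          by (auto simp: to_model_def flatten_def Let_def corners_def)
      next
        assume a: "a \<in> upred (to_model arS (flatten arS G \<eta>)) q"
        have c1: "(w, i) \<in> corners arS (\<eta> (hlab G v))" "v \<in> hverts G"
          using a unfolding eq Inr by (auto simp: to_model_def flatten_def Let_def corners_def)
        show "a \<in> upred (compose arX G (\<lambda>x. to_model arS (\<eta> x))) q"
          using a hp[OF c1(2,1)] ar[OF c1(2)] c1 unfolding eq Inr compose_upred_Inr flat_univ
          by (auto simp: to_model_def flatten_def Let_def corners_def)
      qed
    qed
  qed
qed

theorem lemma5p13:
  fixes S :: "'s set" and arS :: "'s \<Rightarrow> nat"
    and X :: "'x set" and arX :: "'x \<Rightarrow> nat"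
    and G :: "('w, 'x) hg"
  assumes "finite S" and "ranked S arS" and "ranked X arX"
    and "wf_hg X arX G"
  shows "\<exists>f :: ('x \<Rightarrow> ('v \<times> nat, ('s \<times> nat) + nat) model)
                \<Rightarrow> (('w \<times> 'v) \<times> nat, ('s \<times> nat) + nat) model.
           cmso_compatible X
             (\<lambda>x. {to_model arS H | H :: ('v, 's) hg. wf_hg S arS H \<and> harity H = arX x}) f \<and>
           (\<forall>\<eta> :: 'x \<Rightarrow> ('v, 's) hg. valuation S arS X arX \<eta> \<longrightarrow>
              iso_model (f (\<lambda>x. to_model arS (\<eta> x))) (to_model arS (flatten arS G \<eta>)))"
proof (intro exI conjI)
  let ?D = "\<lambda>x. {to_model arS H | H :: ('v, 's) hg. wf_hg S arS H \<and> harity H = arX x}"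
  have G: "wf_hg X arX G" by fact
  show "cmso_compatible X ?D (compose arX G)"
    unfolding cmso_compatible_def
  proof (intro allI impI)
    fix r M and m m' :: "'x \<Rightarrow> ('v \<times> nat, ('s \<times> nat) + nat) model"
    assume H: "\<forall>x\<in>X. m x \<in> ?D x \<and> m' x \<in> ?D x \<and> rM_equiv r M (m x) (m' x)"
    have finD: "finite (univ mm)" if "mm \<in> ?D x" for mm x
    proof -
      from that obtain K :: "('v, 's) hg" where "wf_hg S arS K" "mm = to_model arS K" by blast
      then show ?thesis using finite_corners[of K arS] by (auto simp: wf_hg_def to_model_def)
    qed
    have lab: "hlab G v \<in> X" if "v \<in> hverts G" for v using G that by (auto simp: wf_hg_def)
    show "rM_equiv r M (compose arX G m) (compose arX G m')"
      unfolding rM_equiv_def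
    proof (intro allI impI)
      fix \<phi> :: "('s \<times> nat + nat) fm"
      assume p: "sentence \<phi> \<and> qrank \<phi> \<le> r \<and> moduli \<phi> \<subseteq> M"
      have g: "good r M {} {} \<phi>" using p by (auto simp: good_def sentence_def)
      have scE: "sc v (\<lambda>_. {}) = (\<lambda>_. {})" for v :: 'w
        by (rule ext) (simp add: sc_def)
      have su: "cfg arX G M r {} {} m (\<lambda>_. undefined) (\<lambda>_. {}) m' (\<lambda>_. undefined) (\<lambda>_. {})"
        unfolding cfg_def
      proof (intro conjI ballI)
        show "finite (hverts G)" using G by (simp add: wf_hg_def)
      next
        fix v assume v: "v \<in> hverts G"
        show "finite (univ (m (hlab G v)))" using H lab[OF v] finD by blast
        show "finite (univ (m' (hlab G v)))" using H lab[OF v] finD by blast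
      next
        fix v assume v: "v \<in> hverts G"
        have re: "rM_equiv r M (m (hlab G v)) (m' (hlab G v))" using H lab[OF v] by blast
        show "eqv r M {i \<in> {}. loc (undefined :: ('w \<times> 'v) \<times> nat) = v} {} (m (hlab G v)) (prj \<circ> (\<lambda>_. undefined)) (sc v (\<lambda>_. {}))
           (m' (hlab G v)) (prj \<circ> (\<lambda>_. undefined)) (sc v (\<lambda>_. {}))"
          unfolding eqv_def scE
        proof (intro allI impI)
          fix \<psi> :: "('s \<times> nat + nat) fm"
          assume gp: "good r M {i \<in> {}. loc (undefined :: ('w \<times> 'v) \<times> nat) = v} {} \<psi>"
          then have "sentence \<psi> \<and> qrank \<psi> \<le> r \<and> moduli \<psi> \<subseteq> M" by (auto simp: good_def sentence_def)
          then have "holds (m (hlab G v)) \<psi> = holds (m' (hlab G v)) \<psi>" using re by (auto simp: rM_equiv_def)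
          moreover have "sat (m (hlab G v)) (prj \<circ> (\<lambda>_. undefined)) (\<lambda>_. {}) \<psi> = holds (m (hlab G v)) \<psi>"
            unfolding holds_def by (rule sat_coinc) (use gp in \<open>auto simp: good_def\<close>)
          moreover have "sat (m' (hlab G v)) (prj \<circ> (\<lambda>_. undefined)) (\<lambda>_. {}) \<psi> = holds (m' (hlab G v)) \<psi>"
            unfolding holds_def by (rule sat_coinc) (use gp in \<open>auto simp: good_def\<close>)
          ultimately show "sat (m (hlab G v)) (prj \<circ> (\<lambda>_. undefined)) (\<lambda>_. {}) \<psi> =
                sat (m' (hlab G v)) (prj \<circ> (\<lambda>_. undefined)) (\<lambda>_. {}) \<psi>" by metis
        qed
      qed auto
      show "holds (compose arX G m) \<phi> = holds (compose arX G m') \<phi>"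
        unfolding holds_def by (rule main[OF su g])
    qed
  qed
  show "\<forall>\<eta> :: 'x \<Rightarrow> ('v, 's) hg. valuation S arS X arX \<eta> \<longrightarrow>
          iso_model (compose arX G (\<lambda>x. to_model arS (\<eta> x))) (to_model arS (flatten arS G \<eta>))"
  proof (intro allI impI)
    fix \<eta> :: "'x \<Rightarrow> ('v, 's) hg"
    assume val: "valuation S arS X arX \<eta>"
    have u: "univ (compose arX G (\<lambda>x. to_model arS (\<eta> x))) = univ (to_model arS (flatten arS G \<eta>))"
      using flat_univ by (simp add: to_model_def)
    have b: "brel (compose arX G (\<lambda>x. to_model arS (\<eta> x))) = brel (to_model arS (flatten arS G \<eta>))"
      using flat_brel[OF val G] by (simp add: to_model_def)
    show "iso_model (compose arX G (\<lambda>x. to_model arS (\<eta> x))) (to_model arS (flatten arS G \<eta>))"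
      unfolding iso_model_def
      by (rule exI[of _ id]) (simp add: u b flat_upred[OF val G])
  qed
qed

end
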